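(* Let $n>20$ be an integer. Then $A(n,2)=B(n,2)$.
   Context: $\mathrm{DGP}(n,k)$ ($1\le k<n/2$) is the graph with vertex set $\{(u_i,j),(v_i,j): 0\le i\le n-1,\ j\in\{0,1\}\}$ and edges $\{(u_i,j),(u_{i+1},1-j)\}$, $\{(u_i,j),(v_i,1-j)\}$ (spokes, forming the set $\mathcal{S}$), $\{(v_i,j),(v_{i+k},1-j)\}$, subscripts mod $n$ (the canonical double cover of the generalized Petersen graph $\mathrm{GP}(n,k)$). $A(n,k)=\mathrm{Aut}(\mathrm{DGP}(n,k))$ and $B(n,k)$ is the setwise stabilizer of $\mathcal{S}$ in $A(n,k)$. *)

theory Defs
  imports "HOL-Library.FuncSet"
begin

text \<open>Vertices of DGP(n,k): (s, i, j) with s = Outer for u_i, s = Inner for v_i,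
  0 \<le> i < n, j \<in> {0,1}.\<close>

datatype side = Outer | Inner

type_synonym dvertex = "side \<times> nat \<times> nat"

definition dgp_verts :: "nat \<Rightarrow> dvertex set" where
  "dgp_verts n = {(s, i, j). i < n \<and> j < 2}"

definition dgp_outer_edges :: "nat \<Rightarrow> dvertex set set" where
  "dgp_outer_edges n =
     {{(Outer, i, j), (Outer, (i + 1) mod n, 1 - j)} | i j. i < n \<and> j < 2}"

definition dgp_spokes :: "nat \<Rightarrow> dvertex set set" where
  "dgp_spokes n =
     {{(Outer, i, j), (Inner, i, 1 - j)} | i j. i < n \<and> j < 2}"

definition dgp_inner_edges :: "nat \<Rightarrow> nat \<Rightarrow> dvertex set set" where
  "dgp_inner_edges n k =
     {{(Inner, i, j), (Inner, (i + k) mod n, 1 - j)} | i j. i < n \<and> j < 2}"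

definition dgp_edges :: "nat \<Rightarrow> nat \<Rightarrow> dvertex set set" where
  "dgp_edges n k = dgp_outer_edges n \<union> dgp_spokes n \<union> dgp_inner_edges n k"

text \<open>A(n,k): automorphisms of DGP(n,k), as extensional bijections of the vertex set
  preserving adjacency in both directions.\<close>
definition dgp_aut :: "nat \<Rightarrow> nat \<Rightarrow> (dvertex \<Rightarrow> dvertex) set" where
  "dgp_aut n k = {f \<in> dgp_verts n \<rightarrow>\<^sub>E dgp_verts n.
      bij_betw f (dgp_verts n) (dgp_verts n) \<and>
      (\<forall>x \<in> dgp_verts n. \<forall>y \<in> dgp_verts n.
          {x, y} \<in> dgp_edges n k \<longleftrightarrow> {f x, f y} \<in> dgp_edges n k)}"

text \<open>B(n,k): setwise stabiliser of the spokes in A(n,k).\<close>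
definition dgp_spoke_stab :: "nat \<Rightarrow> nat \<Rightarrow> (dvertex \<Rightarrow> dvertex) set" where
  "dgp_spoke_stab n k = {f \<in> dgp_aut n k. (\<lambda>e. f ` e) ` dgp_spokes n = dgp_spokes n}"

end

theory Submission imports Defs begin

lemma mod_pred_succ: "0 < (n::nat) \<Longrightarrow> i < n \<Longrightarrow> ((i + n - 1) mod n + 1) mod n = i"
proof -
  assume a: "0 < n" "i < n"
  have "((i + n - 1) mod n + 1) mod n = ((i + n - 1) + 1) mod n" by (simp only: mod_add_left_eq)
  also have "(i + n - 1) + 1 = i + n" using a by simp
  finally show ?thesis using a by simp
qed

lemma mod_pred_succ2: "1 < (n::nat) \<Longrightarrow> i < n \<Longrightarrow> ((i + n - 2) mod n + 2) mod n = i"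
proof -
  assume a: "1 < n" "i < n"
  have "((i + n - 2) mod n + 2) mod n = ((i + n - 2) + 2) mod n" by (simp only: mod_add_left_eq)
  also have "(i + n - 2) + 2 = i + n" using a by simp
  finally show ?thesis using a by simp
qed

lemma mod_succ_pred: "0 < (n::nat) \<Longrightarrow> i < n \<Longrightarrow> ((i + 1) mod n + n - 1) mod n = i"
proof -
  assume a: "0 < n" "i < n"
  show ?thesis
  proof (cases "i + 1 = n")
    case True then show ?thesis using a by simp
  next
    case False then have "i + 1 < n" using a by simp
    then show ?thesis by simp
  qed
qed

lemma mod_succ_pred2: "1 < (n::nat) \<Longrightarrow> i < n \<Longrightarrow> ((i + 2) mod n + n - 2) mod n = i"
proof -
  assume a: "1 < n" "i < n"
  have "((i + 2) mod n + n - 2) mod n = ((i + 2) mod n + (n - 2)) mod n" using a by simp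
  also have "\<dots> = (i + 2 + (n - 2)) mod n" by (simp add: mod_add_left_eq)
  also have "i + 2 + (n - 2) = i + n" using a by simp
  finally show ?thesis using a by simp
qed

lemma outer_mem:
  assumes "1 < n" "i < n" "j < 2"
  shows "{(Outer, i, j), y} \<in> dgp_outer_edges n \<longleftrightarrow>
    y = (Outer, (i + 1) mod n, 1 - j) \<or> y = (Outer, (i + n - 1) mod n, 1 - j)"
proof
  assume "{(Outer, i, j), y} \<in> dgp_outer_edges n"
  then obtain i' j' where h: "i' < n" "j' < 2" "{(Outer, i, j), y} = {(Outer, i', j'), (Outer, (i' + 1) mod n, 1 - j')}"
    unfolding dgp_outer_edges_def by blast
  from h(3) have "((Outer, i, j) = (Outer, i', j') \<and> y = (Outer, (i' + 1) mod n, 1 - j')) \<or>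
     ((Outer, i, j) = (Outer, (i' + 1) mod n, 1 - j') \<and> y = (Outer, i', j'))"
    by (simp add: doubleton_eq_iff)
  then show "y = (Outer, (i + 1) mod n, 1 - j) \<or> y = (Outer, (i + n - 1) mod n, 1 - j)"
  proof
    assume "(Outer, i, j) = (Outer, i', j') \<and> y = (Outer, (i' + 1) mod n, 1 - j')"
    then show ?thesis by simp
  next
    assume c: "(Outer, i, j) = (Outer, (i' + 1) mod n, 1 - j') \<and> y = (Outer, i', j')"
    then have "i' = (i + n - 1) mod n" using mod_succ_pred[of n i'] h assms by simp
    moreover have "j' = 1 - j" using c h by auto
    ultimately show ?thesis using c by simp
  qed
next
  assume "y = (Outer, (i + 1) mod n, 1 - j) \<or> y = (Outer, (i + n - 1) mod n, 1 - j)"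
  then show "{(Outer, i, j), y} \<in> dgp_outer_edges n"
  proof
    assume "y = (Outer, (i + 1) mod n, 1 - j)"
    then show ?thesis unfolding dgp_outer_edges_def using assms by blast
  next
    assume y: "y = (Outer, (i + n - 1) mod n, 1 - j)"
    have "{(Outer, i, j), y} = {(Outer, (i + n - 1) mod n, 1 - j), (Outer, ((i + n - 1) mod n + 1) mod n, 1 - (1 - j))}"
      using y mod_pred_succ[of n i] assms by auto
    moreover have "(i + n - 1) mod n < n" "1 - j < 2" using assms by auto
    ultimately show ?thesis unfolding dgp_outer_edges_def by blast
  qed
qed

lemma inner_mem:
  assumes "1 < n" "i < n" "j < 2"
  shows "{(Inner, i, j), y} \<in> dgp_inner_edges n 2 \<longleftrightarrow>
    y = (Inner, (i + 2) mod n, 1 - j) \<or> y = (Inner, (i + n - 2) mod n, 1 - j)"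
proof
  assume "{(Inner, i, j), y} \<in> dgp_inner_edges n 2"
  then obtain i' j' where h: "i' < n" "j' < 2" "{(Inner, i, j), y} = {(Inner, i', j'), (Inner, (i' + 2) mod n, 1 - j')}"
    unfolding dgp_inner_edges_def by blast
  from h(3) have "((Inner, i, j) = (Inner, i', j') \<and> y = (Inner, (i' + 2) mod n, 1 - j')) \<or>
     ((Inner, i, j) = (Inner, (i' + 2) mod n, 1 - j') \<and> y = (Inner, i', j'))"
    by (simp add: doubleton_eq_iff)
  then show "y = (Inner, (i + 2) mod n, 1 - j) \<or> y = (Inner, (i + n - 2) mod n, 1 - j)"
  proof
    assume "(Inner, i, j) = (Inner, i', j') \<and> y = (Inner, (i' + 2) mod n, 1 - j')"
    then show ?thesis by simp
  next
    assume c: "(Inner, i, j) = (Inner, (i' + 2) mod n, 1 - j') \<and> y = (Inner, i', j')"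
    then have "i' = (i + n - 2) mod n" using mod_succ_pred2[of n i'] h assms by simp
    moreover have "j' = 1 - j" using c h by auto
    ultimately show ?thesis using c by simp
  qed
next
  assume "y = (Inner, (i + 2) mod n, 1 - j) \<or> y = (Inner, (i + n - 2) mod n, 1 - j)"
  then show "{(Inner, i, j), y} \<in> dgp_inner_edges n 2"
  proof
    assume "y = (Inner, (i + 2) mod n, 1 - j)"
    then show ?thesis unfolding dgp_inner_edges_def using assms by blast
  next
    assume y: "y = (Inner, (i + n - 2) mod n, 1 - j)"
    have "{(Inner, i, j), y} = {(Inner, (i + n - 2) mod n, 1 - j), (Inner, ((i + n - 2) mod n + 2) mod n, 1 - (1 - j))}"
      using y mod_pred_succ2[of n i] assms by auto
    moreover have "(i + n - 2) mod n < n" "1 - j < 2" using assms by auto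
    ultimately show ?thesis unfolding dgp_inner_edges_def by blast
  qed
qed

lemma spoke_memO:
  assumes "i < n" "j < 2"
  shows "{(Outer, i, j), y} \<in> dgp_spokes n \<longleftrightarrow> y = (Inner, i, 1 - j)"
  using assms unfolding dgp_spokes_def by (auto simp: doubleton_eq_iff)

lemma spoke_memI:
  assumes "i < n" "j < 2"
  shows "{(Inner, i, j), y} \<in> dgp_spokes n \<longleftrightarrow> y = (Outer, i, 1 - j)"
  using assms unfolding dgp_spokes_def by (auto simp: doubleton_eq_iff)

lemma outer_notI: "{(Inner, i, j), y} \<notin> dgp_outer_edges n"
  unfolding dgp_outer_edges_def by (auto simp: doubleton_eq_iff)
lemma inner_notO: "{(Outer, i, j), y} \<notin> dgp_inner_edges n k"
  unfolding dgp_inner_edges_def by (auto simp: doubleton_eq_iff)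

definition idx :: "nat \<Rightarrow> nat \<Rightarrow> int \<Rightarrow> nat" where
  "idx n i d = nat ((int i + d) mod int n)"

lemma idx_int: "0 < n \<Longrightarrow> int (idx n i d) = (int i + d) mod int n"
  unfolding idx_def by simp

lemma idx_lt: "0 < n \<Longrightarrow> idx n i d < n"
  unfolding idx_def by (simp add: nat_less_iff)

lemma idx0: "i < n \<Longrightarrow> idx n i 0 = i"
  unfolding idx_def by simp

lemma idx_shift: assumes "0 < n" shows "(idx n i d + m) mod n = idx n i (d + int m)"
proof -
  have "int ((idx n i d + m) mod n) = (int (idx n i d) + int m) mod int n" by (simp add: zmod_int)
  also have "\<dots> = ((int i + d) mod int n + int m) mod int n" using idx_int[OF assms] by simp
  also have "\<dots> = (int i + (d + int m)) mod int n" by (simp add: mod_add_left_eq add.assoc)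
  also have "\<dots> = int (idx n i (d + int m))" using idx_int[OF assms] by simp
  finally show ?thesis by simp
qed

lemma idx_succ: "0 < n \<Longrightarrow> (idx n i d + 1) mod n = idx n i (d + 1)"
  using idx_shift[of n i d 1] by simp
lemma idx_succ2: "0 < n \<Longrightarrow> (idx n i d + 2) mod n = idx n i (d + 2)"
  using idx_shift[of n i d 2] by simp

lemma idx_shiftn: assumes "0 < n" "m \<le> n" shows "(idx n i d + n - m) mod n = idx n i (d - int m)"
proof -
  have "idx n i d + n - m = idx n i d + (n - m)" using assms by simp
  then have "(idx n i d + n - m) mod n = idx n i (d + int (n - m))" using idx_shift[OF assms(1)] by simp
  also have "idx n i (d + int (n - m)) = idx n i (d - int m)"
  proof -
    have "int (n - m) = int n - int m" using assms by (simp add: of_nat_diff)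
    then have eq: "int i + (d + int (n - m)) = int i + (d - int m) + int n" by simp
    show ?thesis unfolding idx_def by (metis eq mod_add_self2)
  qed
  finally show ?thesis .
qed
lemma idx_pred: "0 < n \<Longrightarrow> (idx n i d + n - 1) mod n = idx n i (d - 1)"
  using idx_shiftn[of n 1 i d] by simp
lemma idx_pred2: "1 < n \<Longrightarrow> (idx n i d + n - 2) mod n = idx n i (d - 2)"
  using idx_shiftn[of n 2 i d] by simp

lemma idx_eq: assumes "20 < n" "\<bar>d - e\<bar> \<le> 20" shows "(idx n i d = idx n i e) = (d = e)"
proof
  assume h: "idx n i d = idx n i e"
  have "(int i + d) mod int n = (int i + e) mod int n"
    using arg_cong[OF h, of int] idx_int[of n] assms by simp
  then have "int n dvd (int i + d) - (int i + e)" by (simp add: mod_eq_dvd_iff)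
  then have "int n dvd (d - e)" by simp
  then obtain q where q: "d - e = int n * q" by (auto elim: dvdE)
  show "d = e"
  proof (rule ccontr)
    assume "d \<noteq> e"
    then have "q \<noteq> 0" using q by auto
    then have "\<bar>q\<bar> \<ge> 1" by simp
    then have "int n * 1 \<le> int n * \<bar>q\<bar>" by (rule mult_left_mono) simp
    then have "\<bar>int n * q\<bar> \<ge> int n" by (simp add: abs_mult)
    then show False using q assms by simp
  qed
qed simp

definition adj :: "nat \<Rightarrow> dvertex \<Rightarrow> dvertex \<Rightarrow> bool" where
  "adj n x y \<longleftrightarrow> {x, y} \<in> dgp_edges n 2"

lemma adj_sym: "adj n x y = adj n y x"
  unfolding adj_def by (simp add: insert_commute)

lemma adj_O: assumes "20 < n" "j < 2"
  shows "adj n (Outer, idx n i d, j) y \<longleftrightarrow> y = (Outer, idx n i (d + 1), 1 - j) \<or>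
     y = (Outer, idx n i (d - 1), 1 - j) \<or> y = (Inner, idx n i d, 1 - j)"
proof -
  have n: "0 < n" "1 < n" using assms by auto
  have "idx n i d < n" using idx_lt[OF n(1)] .
  then show ?thesis
    using outer_mem[OF n(2) _ assms(2), of "idx n i d" y] spoke_memO[OF _ assms(2), of "idx n i d" n y]
      inner_notO[of "idx n i d" j y n 2] idx_succ[OF n(1), of i d] idx_pred[OF n(1), of i d]
    by (auto simp: adj_def dgp_edges_def)
qed

lemma adj_I: assumes "20 < n" "j < 2"
  shows "adj n (Inner, idx n i d, j) y \<longleftrightarrow> y = (Inner, idx n i (d + 2), 1 - j) \<or>
     y = (Inner, idx n i (d - 2), 1 - j) \<or> y = (Outer, idx n i d, 1 - j)"
proof -
  have n: "0 < n" "1 < n" using assms by auto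
  have "idx n i d < n" using idx_lt[OF n(1)] .
  then show ?thesis
    using inner_mem[OF n(2) _ assms(2), of "idx n i d" y] spoke_memI[OF _ assms(2), of "idx n i d" n y]
      outer_notI[of "idx n i d" j y n] idx_succ2[OF n(1), of i d] idx_pred2[OF n(2), of i d]
    by (auto simp: adj_def dgp_edges_def)
qed

definition NCP :: "nat \<Rightarrow> dvertex \<Rightarrow> bool" where
  "NCP n x \<longleftrightarrow> (\<exists>y x0 w. adj n x y \<and> adj n x x0 \<and> adj n y w \<and> x0 \<noteq> y \<and> w \<noteq> x \<and> w \<noteq> x0 \<and>
     \<not> (\<exists>a1 a2 a3 a4. adj n w a1 \<and> adj n a1 a2 \<and> adj n a2 a3 \<and> adj n a3 a4 \<and> adj n a4 x0 \<and>
        distinct [x0, x, y, w, a1, a2, a3, a4]))"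

lemma adj_O3: assumes "20 < n" "j < 2"
  shows "adj n (Outer, idx n i d, j) (s', i', j') \<longleftrightarrow> (s', i', j') = (Outer, idx n i (d + 1), 1 - j) \<or>
     (s', i', j') = (Outer, idx n i (d - 1), 1 - j) \<or> (s', i', j') = (Inner, idx n i d, 1 - j)"
  by (rule adj_O[OF assms])

lemma adj_I3: assumes "20 < n" "j < 2"
  shows "adj n (Inner, idx n i d, j) (s', i', j') \<longleftrightarrow> (s', i', j') = (Inner, idx n i (d + 2), 1 - j) \<or>
     (s', i', j') = (Inner, idx n i (d - 2), 1 - j) \<or> (s', i', j') = (Outer, idx n i d, 1 - j)"
  by (rule adj_I[OF assms])

lemma ex_adj_O: assumes "20 < n" "j < 2"
  shows "(\<exists>y. adj n (Outer, idx n i d, j) y \<and> P y) \<longleftrightarrow> P (Outer, idx n i (d + 1), 1 - j) \<or>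
     P (Outer, idx n i (d - 1), 1 - j) \<or> P (Inner, idx n i d, 1 - j)"
  by (simp only: adj_O[OF assms]) blast

lemma ex_adj_I: assumes "20 < n" "j < 2"
  shows "(\<exists>y. adj n (Inner, idx n i d, j) y \<and> P y) \<longleftrightarrow> P (Inner, idx n i (d + 2), 1 - j) \<or>
     P (Inner, idx n i (d - 2), 1 - j) \<or> P (Outer, idx n i d, 1 - j)"
  by (simp only: adj_I[OF assms]) blast

lemma ex_adj_O': assumes "20 < n" "j < 2"
  shows "(\<exists>y. adj n y (Outer, idx n i d, j) \<and> P y) \<longleftrightarrow> P (Outer, idx n i (d + 1), 1 - j) \<or>
     P (Outer, idx n i (d - 1), 1 - j) \<or> P (Inner, idx n i d, 1 - j)"
  by (simp only: adj_sym[of n _ "(Outer, idx n i d, j)"] ex_adj_O[OF assms])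

lemma ex_adj_I': assumes "20 < n" "j < 2"
  shows "(\<exists>y. adj n y (Inner, idx n i d, j) \<and> P y) \<longleftrightarrow> P (Inner, idx n i (d + 2), 1 - j) \<or>
     P (Inner, idx n i (d - 2), 1 - j) \<or> P (Outer, idx n i d, 1 - j)"
  by (simp only: adj_sym[of n _ "(Inner, idx n i d, j)"] ex_adj_I[OF assms])

lemmas comp_simps = adj_O3 adj_I3 ex_adj_O ex_adj_I ex_adj_O' ex_adj_I' idx_eq

lemma NCP_Inner0: assumes "20 < n" shows "NCP n (Inner, idx n i 0, 0)"
  unfolding NCP_def
  apply (rule exI[of _ "(Inner, idx n i 2, 1)"])
  apply (rule exI[of _ "(Inner, idx n i (-2), 1)"])
  apply (rule exI[of _ "(Inner, idx n i 4, 0)"])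
  using assms by (simp del: split_paired_Ex split_paired_All add: comp_simps)

lemma NCP_Outer0: assumes "20 < n" shows "\<not> NCP n (Outer, idx n i 0, 0)"
  unfolding NCP_def
  using assms by (simp del: split_paired_Ex split_paired_All add: comp_simps)

lemma NCP_Inner1: assumes "20 < n" shows "NCP n (Inner, idx n i 0, 1)"
  unfolding NCP_def
  apply (rule exI[of _ "(Inner, idx n i 2, 0)"])
  apply (rule exI[of _ "(Inner, idx n i (-2), 0)"])
  apply (rule exI[of _ "(Inner, idx n i 4, 1)"])
  using assms by (simp del: split_paired_Ex split_paired_All add: comp_simps)

lemma NCP_Outer1: assumes "20 < n" shows "\<not> NCP n (Outer, idx n i 0, 1)"
  unfolding NCP_def
  using assms by (simp del: split_paired_Ex split_paired_All add: comp_simps)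

lemma NCP_iff: assumes "20 < n" "x \<in> dgp_verts n" shows "NCP n x \<longleftrightarrow> fst x = Inner"
proof -
  obtain s i j where x: "x = (s, i, j)" "i < n" "j < 2" using assms(2) unfolding dgp_verts_def by auto
  then have x': "x = (s, idx n i 0, j)" using idx0 by simp
  have "j = 0 \<or> j = 1" using x by auto
  then show ?thesis using x' NCP_Inner0[OF assms(1)] NCP_Inner1[OF assms(1)]
      NCP_Outer0[OF assms(1)] NCP_Outer1[OF assms(1)]
    by (cases s) auto
qed

lemma edge_V: assumes "0 < n" "e \<in> dgp_edges n k" "x \<in> e" shows "x \<in> dgp_verts n"
proof -
  have "e \<in> dgp_outer_edges n \<or> e \<in> dgp_spokes n \<or> e \<in> dgp_inner_edges n k"
    using assms(2) unfolding dgp_edges_def by blast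
  then show ?thesis
  proof (elim disjE)
    assume "e \<in> dgp_outer_edges n"
    then obtain i j where "i < n" "j < 2" "e = {(Outer, i, j), (Outer, (i + 1) mod n, 1 - j)}"
      unfolding dgp_outer_edges_def by blast
    then show ?thesis using assms(1,3) unfolding dgp_verts_def by auto
  next
    assume "e \<in> dgp_spokes n"
    then obtain i j where "i < n" "j < 2" "e = {(Outer, i, j), (Inner, i, 1 - j)}"
      unfolding dgp_spokes_def by blast
    then show ?thesis using assms(1,3) unfolding dgp_verts_def by auto
  next
    assume "e \<in> dgp_inner_edges n k"
    then obtain i j where "i < n" "j < 2" "e = {(Inner, i, j), (Inner, (i + k) mod n, 1 - j)}"
      unfolding dgp_inner_edges_def by blast
    then show ?thesis using assms(1,3) unfolding dgp_verts_def by auto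
  qed
qed

lemma adj_V: assumes "0 < n" "adj n x y" shows "x \<in> dgp_verts n" "y \<in> dgp_verts n"
  using edge_V[OF assms(1), of "{x, y}" 2] assms(2) unfolding adj_def by auto

lemma NCP_transfer:
  assumes n: "0 < n"
    and g: "inj_on g (dgp_verts n)" "g ` dgp_verts n = dgp_verts n"
    and ga: "\<And>x y. x \<in> dgp_verts n \<Longrightarrow> y \<in> dgp_verts n \<Longrightarrow> adj n x y = adj n (g x) (g y)"
    and x: "x \<in> dgp_verts n" and P: "NCP n x"
  shows "NCP n (g x)"
proof -
  let ?V = "dgp_verts n"
  obtain y x0 w where h: "adj n x y" "adj n x x0" "adj n y w" "x0 \<noteq> y" "w \<noteq> x" "w \<noteq> x0"
    and nc: "\<not> (\<exists>a1 a2 a3 a4. adj n w a1 \<and> adj n a1 a2 \<and> adj n a2 a3 \<and> adj n a3 a4 \<and> adj n a4 x0 \<and>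
        distinct [x0, x, y, w, a1, a2, a3, a4])"
    using P unfolding NCP_def by (elim exE conjE) (rule that)
  have V: "y \<in> ?V" "x0 \<in> ?V" "w \<in> ?V" using adj_V[OF n] h by auto
  have h': "adj n (g x) (g y)" "adj n (g x) (g x0)" "adj n (g y) (g w)" "g x0 \<noteq> g y" "g w \<noteq> g x" "g w \<noteq> g x0"
  proof -
    show "adj n (g x) (g y)" "adj n (g x) (g x0)" "adj n (g y) (g w)"
      using h(1-3) V x ga[of x y] ga[of x x0] ga[of y w] by simp_all
    show "g x0 \<noteq> g y" using h(4) V g(1) by (metis inj_onD)
    show "g w \<noteq> g x" using h(5) V x g(1) by (metis inj_onD)
    show "g w \<noteq> g x0" using h(6) V g(1) by (metis inj_onD)
  qed
  have nc': "\<not> (\<exists>b1 b2 b3 b4. adj n (g w) b1 \<and> adj n b1 b2 \<and> adj n b2 b3 \<and> adj n b3 b4 \<and> adj n b4 (g x0) \<and>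
        distinct [g x0, g x, g y, g w, b1, b2, b3, b4])"
  proof
    assume "\<exists>b1 b2 b3 b4. adj n (g w) b1 \<and> adj n b1 b2 \<and> adj n b2 b3 \<and> adj n b3 b4 \<and> adj n b4 (g x0) \<and>
        distinct [g x0, g x, g y, g w, b1, b2, b3, b4]"
    then obtain b1 b2 b3 b4 where b: "adj n (g w) b1" "adj n b1 b2" "adj n b2 b3" "adj n b3 b4" "adj n b4 (g x0)"
        "distinct [g x0, g x, g y, g w, b1, b2, b3, b4]" by (elim exE conjE) (rule that)
    have bV: "b1 \<in> ?V" "b2 \<in> ?V" "b3 \<in> ?V" "b4 \<in> ?V" using adj_V[OF n] b by auto
    obtain a1 where a1: "a1 \<in> ?V" "g a1 = b1" using bV(1) g(2) by (metis imageE)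
    obtain a2 where a2: "a2 \<in> ?V" "g a2 = b2" using bV(2) g(2) by (metis imageE)
    obtain a3 where a3: "a3 \<in> ?V" "g a3 = b3" using bV(3) g(2) by (metis imageE)
    obtain a4 where a4: "a4 \<in> ?V" "g a4 = b4" using bV(4) g(2) by (metis imageE)
    have "adj n w a1" "adj n a1 a2" "adj n a2 a3" "adj n a3 a4" "adj n a4 x0"
      using b(1-5) a1 a2 a3 a4 V x ga[of w a1] ga[of a1 a2] ga[of a2 a3] ga[of a3 a4] ga[of a4 x0] by simp_all
    moreover have "distinct [x0, x, y, w, a1, a2, a3, a4]"
    proof -
      have "distinct (map g [x0, x, y, w, a1, a2, a3, a4])" using b(6) a1(2) a2(2) a3(2) a4(2) by simp
      then show ?thesis by (simp only: distinct_map)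
    qed
    ultimately have "\<exists>a1 a2 a3 a4. adj n w a1 \<and> adj n a1 a2 \<and> adj n a2 a3 \<and> adj n a3 a4 \<and> adj n a4 x0 \<and>
        distinct [x0, x, y, w, a1, a2, a3, a4]" by (intro exI conjI) (assumption+)
    then show False using nc by (rule notE[rotated])
  qed
  show ?thesis unfolding NCP_def
    apply (rule exI[of _ "g y"], rule exI[of _ "g x0"], rule exI[of _ "g w"])
    using h' nc' by (intro conjI)
qed

lemma spoke_char: "e \<in> dgp_spokes n \<longleftrightarrow> (\<exists>x y. e = {x, y} \<and> adj n x y \<and> fst x \<noteq> fst y)"
proof
  assume "e \<in> dgp_spokes n"
  then obtain i j where e: "e = {(Outer, i, j), (Inner, i, 1 - j)}" unfolding dgp_spokes_def by blast
  have "adj n (Outer, i, j) (Inner, i, 1 - j)" using \<open>e \<in> dgp_spokes n\<close> e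
    unfolding adj_def dgp_edges_def by simp
  then show "\<exists>x y. e = {x, y} \<and> adj n x y \<and> fst x \<noteq> fst y"
    by (intro exI[of _ "(Outer, i, j)"] exI[of _ "(Inner, i, 1 - j)"]) (simp add: e)
next
  assume "\<exists>x y. e = {x, y} \<and> adj n x y \<and> fst x \<noteq> fst y"
  then obtain x y where e: "e = {x, y}" "adj n x y" "fst x \<noteq> fst y" by blast
  have "e \<notin> dgp_outer_edges n"
  proof
    assume "e \<in> dgp_outer_edges n"
    then obtain i j where "{x, y} = {(Outer, i, j), (Outer, (i + 1) mod n, 1 - j)}"
      using e(1) unfolding dgp_outer_edges_def by blast
    then have "fst x = Outer \<and> fst y = Outer" by (auto simp: doubleton_eq_iff)
    then show False using e(3) by simp
  qed
  moreover have "e \<notin> dgp_inner_edges n 2"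
  proof
    assume "e \<in> dgp_inner_edges n 2"
    then obtain i j where "{x, y} = {(Inner, i, j), (Inner, (i + 2) mod n, 1 - j)}"
      using e(1) unfolding dgp_inner_edges_def by blast
    then have "fst x = Inner \<and> fst y = Inner" by (auto simp: doubleton_eq_iff)
    then show False using e(3) by simp
  qed
  ultimately show "e \<in> dgp_spokes n" using e unfolding adj_def dgp_edges_def by auto
qed

lemma side_neq: "((a::side) \<noteq> b) = ((a = Inner) \<noteq> (b = Inner))"
  by (cases a; cases b) auto

theorem lemma5p9:
  fixes n :: nat
  assumes "n > 20"
  shows "dgp_aut n 2 = dgp_spoke_stab n 2"
proof
  show "dgp_spoke_stab n 2 \<subseteq> dgp_aut n 2" unfolding dgp_spoke_stab_def by auto
next
  show "dgp_aut n 2 \<subseteq> dgp_spoke_stab n 2"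
  proof
    fix f assume f: "f \<in> dgp_aut n 2"
    let ?V = "dgp_verts n"
    have n: "0 < n" using assms by simp
    have fb: "bij_betw f ?V ?V" and fa: "\<And>x y. x \<in> ?V \<Longrightarrow> y \<in> ?V \<Longrightarrow> adj n x y = adj n (f x) (f y)"
      using f unfolding dgp_aut_def adj_def by blast+
    have fi: "inj_on f ?V" and fs: "f ` ?V = ?V" using fb by (auto simp: bij_betw_def)
    define h where "h = inv_into ?V f"
    have hb: "bij_betw h ?V ?V" unfolding h_def using fb by (rule bij_betw_inv_into)
    have hi: "inj_on h ?V" and hs: "h ` ?V = ?V" using hb by (auto simp: bij_betw_def)
    have fh: "\<And>x. x \<in> ?V \<Longrightarrow> f (h x) = x" unfolding h_def using fs by (simp add: f_inv_into_f)
    have hf: "\<And>x. x \<in> ?V \<Longrightarrow> h (f x) = x" unfolding h_def using fi by (simp add: inv_into_f_f)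
    have ha: "\<And>x y. x \<in> ?V \<Longrightarrow> y \<in> ?V \<Longrightarrow> adj n x y = adj n (h x) (h y)"
    proof -
      fix x y assume xy: "x \<in> ?V" "y \<in> ?V"
      then have "h x \<in> ?V" "h y \<in> ?V" using hs by auto
      then show "adj n x y = adj n (h x) (h y)" using fa[of "h x" "h y"] fh xy by simp
    qed
    have side: "\<And>x. x \<in> ?V \<Longrightarrow> (fst (f x) = Inner) = (fst x = Inner)"
    proof -
      fix x assume x: "x \<in> ?V"
      have fx: "f x \<in> ?V" using x fs by auto
      have "NCP n x \<Longrightarrow> NCP n (f x)" using NCP_transfer[OF n fi fs fa x] by blast
      moreover have "NCP n (f x) \<Longrightarrow> NCP n x" using NCP_transfer[OF n hi hs ha fx] hf[OF x] by simp
      ultimately show "(fst (f x) = Inner) = (fst x = Inner)"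
        using NCP_iff[OF assms x] NCP_iff[OF assms fx] by blast
    qed
    have side2: "\<And>x y. x \<in> ?V \<Longrightarrow> y \<in> ?V \<Longrightarrow> (fst (f x) \<noteq> fst (f y)) = (fst x \<noteq> fst y)"
    proof -
      fix x y assume xy: "x \<in> ?V" "y \<in> ?V"
      show "(fst (f x) \<noteq> fst (f y)) = (fst x \<noteq> fst y)"
        using side[OF xy(1)] side[OF xy(2)] side_neq[of "fst (f x)" "fst (f y)"] side_neq[of "fst x" "fst y"]
        by (simp only:)
    qed
    have "(\<lambda>e. f ` e) ` dgp_spokes n = dgp_spokes n"
    proof
      show "(\<lambda>e. f ` e) ` dgp_spokes n \<subseteq> dgp_spokes n"
      proof
        fix e' assume "e' \<in> (\<lambda>e. f ` e) ` dgp_spokes n"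
        then obtain e where e: "e \<in> dgp_spokes n" "e' = f ` e" by blast
        then obtain x y where xy: "e = {x, y}" "adj n x y" "fst x \<noteq> fst y" using spoke_char by blast
        have V: "x \<in> ?V" "y \<in> ?V" using adj_V[OF n xy(2)] by auto
        have "e' = {f x, f y}" "adj n (f x) (f y)" "fst (f x) \<noteq> fst (f y)"
          using e xy V fa[of x y] side2[of x y] by auto
        then show "e' \<in> dgp_spokes n" using spoke_char by blast
      qed
    next
      show "dgp_spokes n \<subseteq> (\<lambda>e. f ` e) ` dgp_spokes n"
      proof
        fix e' assume "e' \<in> dgp_spokes n"
        then obtain x' y' where xy: "e' = {x', y'}" "adj n x' y'" "fst x' \<noteq> fst y'" using spoke_char by blast
        have V: "x' \<in> ?V" "y' \<in> ?V" using adj_V[OF n xy(2)] by auto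
        then have V': "h x' \<in> ?V" "h y' \<in> ?V" using hs by auto
        have "adj n (h x') (h y')" using ha[of x' y'] V xy by simp
        moreover have "fst (h x') \<noteq> fst (h y')" using side2[OF V'] fh V xy by simp
        ultimately have "{h x', h y'} \<in> dgp_spokes n" using spoke_char by blast
        moreover have "e' = f ` {h x', h y'}" using xy fh V by simp
        ultimately show "e' \<in> (\<lambda>e. f ` e) ` dgp_spokes n" by blast
      qed
    qed
    then show "f \<in> dgp_spoke_stab n 2" using f unfolding dgp_spoke_stab_def by blast
  qed
qed

end
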